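(* For every $0\le t\le T-1$, the set $\mathrm{graph}(\overline{\mathcal P}^{\mathrm{int}}_t):=\{(\bar\omega,\overline{\mathbb P}):\bar\omega\in\overline\Omega_t,\ \overline{\mathbb P}\in\overline{\mathcal P}^{\mathrm{int}}_t(\bar\omega)\}\subseteq \overline\Omega_t\times\mathfrak B(\Omega_1\times\Lambda_1)$ is analytic.
   Context: Setting: Fix integers $T\ge1$, $d\ge2$. $\Omega_0=\{\omega_0\}$, $\Omega_1$ is a Polish space, $\Omega_t:=\Omega_0\times\Omega_1^t$ ($t\le T$), $\Omega:=\Omega_T$; write $\omega^t=(\omega_0,\dots,\omega_t)$. $\mathcal F^0_t:=\mathcal B(\Omega_t)$, $\mathcal F_t$ its universal completion. $\mathfrak B(E)$ denotes the set of Borel probability measures on a Polish space $E$. For $t\le T-1$ and $\omega\in\Omega_t$, $\mathcal P_t(\omega)\subseteq\mathfrak B(\Omega_1)$ is nonempty convex, and $\{(\omega,\mathbb P):\mathbb P\in\mathcal P_t(\omega)\}\subseteq\Omega_t\times\mathfrak B(\Omega_1)$ is analytic. For each $t$, $K_t$ is an $\mathcal F^0_t$-measurable random closed convex cone containing $\mathbb R^d_+$, $K^*_t$ its dual cone $\{y:\langle x,y\rangle\ge0\ \forall x\in K_t\}$, $K^{*,0}_t:=\{y\in K^*_t:y^d=1\}$, with $K^*_t\cap\partial\mathbb R^d_+=\{0\}$ and $\mathrm{int}K^*_t\ne\emptyset$ everywhere; $S$ is $\mathbb F^0$-adapted with $S_t\in K^{*,0}_t\cap\mathrm{int}K^*_t$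 everywhere, and there is $c>1$ with $c^{-1}S^i_t\le y^i\le cS^i_t$ for all $i\le d-1$, $y\in K^{*,0}_t$. Enlargement: $\Lambda_1:=[c^{-1},c]^{d-1}$, $\overline\Omega_0:=\Omega_0\times\Lambda_1$, $\overline\Omega_t:=\overline\Omega_0\times(\Omega_1\times\Lambda_1)^t$, elements $\bar\omega^t=(\omega^t,\theta^t)$ with $\theta^t=(\theta_0,\dots,\theta_t)$. $X_t(\omega,\theta):=\Pi_{K^{*,0}_t(\omega^t)}[S_t(\omega^t)\theta_t]$ (Euclidean projection), where $S_t\theta_t:=(S^1_t\theta^1_t,\dots,S^{d-1}_t\theta^{d-1}_t,S^d_t)$; it is viewed as a function on $\overline\Omega_t$. For $t\le T-1$ and $\bar\omega=(\omega,\theta)\in\overline\Omega_t$: $\overline{\mathcal P}_t(\bar\omega):=\{\overline{\mathbb P}\in\mathfrak B(\Omega_1\times\Lambda_1):\overline{\mathbb P}|_{\Omega_1}\in\mathcal P_t(\omega)\}$ and $\overline{\mathcal P}^{\mathrm{int}}_t(\bar\omega):=\{\overline{\mathbb P}\in\overline{\mathcal P}_t(\bar\omega):(\delta_{\bar\omega}\otimes\overline{\mathbb P})[X_{t+1}\in\mathrm{int}K^*_{t+1}]=1\}$, where $\delta_{\bar\omega}\otimes\overline{\mathbb P}\in\mathfrak B(\overline\Omega_{t+1})$. *)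

theory Defs
  imports "HOL-Probability.Probability"
begin

definition baire_measure :: "(nat \<Rightarrow> nat) measure" where
  "baire_measure = PiM UNIV (\<lambda>_. count_space UNIV)"

definition analytic_set :: "'a measure \<Rightarrow> 'a set \<Rightarrow> bool" where
  "analytic_set M A \<longleftrightarrow> (\<exists>B \<in> sets (M \<Otimes>\<^sub>M baire_measure). A = fst ` B)"

text \<open>Omega_t = Omega_0 x Omega_1^t; Omega_0 is a singleton and is dropped:
  a path is an (extensional) function on {1..t}.\<close>
definition path_space :: "nat \<Rightarrow> (nat \<Rightarrow> 'w::topological_space) measure" where
  "path_space t = PiM {1..t} (\<lambda>_. borel)"

definition mix_measure :: "real \<Rightarrow> 'a measure \<Rightarrow> 'a measure \<Rightarrow> 'a measure" where
  "mix_measure l P Q = measure_of (space P) (sets P)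
     (\<lambda>A. ennreal l * emeasure P A + ennreal (1 - l) * emeasure Q A)"

definition dual_cone :: "(real ^ 'd) set \<Rightarrow> (real ^ 'd) set" where
  "dual_cone K = {y. \<forall>x\<in>K. 0 \<le> inner x y}"

definition nonneg_orthant :: "(real ^ 'd) set" where
  "nonneg_orthant = {x. \<forall>i. 0 \<le> x $ i}"

definition Kstar0 :: "'d \<Rightarrow> (real ^ 'd) set \<Rightarrow> (real ^ 'd) set" where
  "Kstar0 e K = {y \<in> dual_cone K. y $ e = 1}"

definition effros_measurable :: "'a measure \<Rightarrow> ('a \<Rightarrow> ('b::topological_space) set) \<Rightarrow> bool" where
  "effros_measurable M K \<longleftrightarrow> (\<forall>U. open U \<longrightarrow> {\<omega> \<in> space M. K \<omega> \<inter> U \<noteq> {}} \<in> sets M)"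

text \<open>Lambda_1 = [1/c, c]^(d-1), represented as the vectors theta in R^d with
  theta_e = 1 and theta_i in [1/c, c] for i \<noteq> e.\<close>
definition Lambda1 :: "'d \<Rightarrow> real \<Rightarrow> (real ^ 'd) set" where
  "Lambda1 e c = {\<theta>. \<theta> $ e = 1 \<and> (\<forall>i. i \<noteq> e \<longrightarrow> \<theta> $ i \<in> {1/c..c})}"

definition Lambda_measure :: "'d \<Rightarrow> real \<Rightarrow> (real ^ 'd) measure" where
  "Lambda_measure e c = restrict_space borel (Lambda1 e c)"

definition enl_space :: "'d \<Rightarrow> real \<Rightarrow> nat \<Rightarrow> ((nat \<Rightarrow> 'w::topological_space) \<times> (nat \<Rightarrow> real ^ 'd)) measure" where
  "enl_space e c t = path_space t \<Otimes>\<^sub>M PiM {0..t} (\<lambda>_. Lambda_measure e c)"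

definition step_space :: "'d \<Rightarrow> real \<Rightarrow> ('w::topological_space \<times> (real ^ 'd)) measure" where
  "step_space e c = (borel :: 'w measure) \<Otimes>\<^sub>M Lambda_measure e c"

definition concat_path :: "nat \<Rightarrow> (nat \<Rightarrow> 'w) \<times> (nat \<Rightarrow> 'v) \<Rightarrow> 'w \<times> 'v \<Rightarrow> (nat \<Rightarrow> 'w) \<times> (nat \<Rightarrow> 'v)" where
  "concat_path t wb z = ((fst wb)(Suc t := fst z), (snd wb)(Suc t := snd z))"

text \<open>delta_{omega-bar} (x) P-bar as a measure on Omega-bar_{t+1}.\<close>
definition dirac_prod :: "'d \<Rightarrow> real \<Rightarrow> nat \<Rightarrow> (nat \<Rightarrow> 'w::topological_space) \<times> (nat \<Rightarrow> real ^ 'd)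
    \<Rightarrow> ('w \<times> (real ^ 'd)) measure \<Rightarrow> ((nat \<Rightarrow> 'w) \<times> (nat \<Rightarrow> real ^ 'd)) measure" where
  "dirac_prod e c t wb Pb = distr Pb (enl_space e c (Suc t)) (concat_path t wb)"

definition Xproc :: "'d \<Rightarrow> (nat \<Rightarrow> (nat \<Rightarrow> 'w) \<Rightarrow> (real ^ 'd) set) \<Rightarrow> (nat \<Rightarrow> (nat \<Rightarrow> 'w) \<Rightarrow> real ^ 'd)
    \<Rightarrow> nat \<Rightarrow> (nat \<Rightarrow> 'w) \<times> (nat \<Rightarrow> real ^ 'd) \<Rightarrow> real ^ 'd" where
  "Xproc e K S t wb = closest_point (Kstar0 e (K t (fst wb)))
      (\<chi> i. S t (fst wb) $ i * snd wb t $ i)"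

definition Pbar :: "'d \<Rightarrow> real \<Rightarrow> (nat \<Rightarrow> (nat \<Rightarrow> 'w::topological_space) \<Rightarrow> 'w measure set)
    \<Rightarrow> nat \<Rightarrow> (nat \<Rightarrow> 'w) \<times> (nat \<Rightarrow> real ^ 'd) \<Rightarrow> ('w \<times> (real ^ 'd)) measure set" where
  "Pbar e c P t wb = {Pb \<in> space (prob_algebra (step_space e c)). distr Pb borel fst \<in> P t (fst wb)}"

definition Pbar_int :: "'d \<Rightarrow> real \<Rightarrow> (nat \<Rightarrow> (nat \<Rightarrow> 'w::topological_space) \<Rightarrow> (real ^ 'd) set)
    \<Rightarrow> (nat \<Rightarrow> (nat \<Rightarrow> 'w) \<Rightarrow> real ^ 'd) \<Rightarrow> (nat \<Rightarrow> (nat \<Rightarrow> 'w) \<Rightarrow> 'w measure set)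
    \<Rightarrow> nat \<Rightarrow> (nat \<Rightarrow> 'w) \<times> (nat \<Rightarrow> real ^ 'd) \<Rightarrow> ('w \<times> (real ^ 'd)) measure set" where
  "Pbar_int e c K S P t wb = {Pb \<in> Pbar e c P t wb.
     emeasure (dirac_prod e c t wb Pb)
       {x \<in> space (enl_space e c (Suc t)).
          Xproc e K S (Suc t) x \<in> interior (dual_cone (K (Suc t) (fst x)))} = 1}"

end

theory Submission
  imports Defs
begin

lemma concat_meas:
  "(\<lambda>(wb,z). concat_path t wb z) \<in> measurable (enl_space e c t \<Otimes>\<^sub>M step_space e c)
     (enl_space e c (Suc t) :: ((nat \<Rightarrow> 'w::topological_space) \<times> (nat \<Rightarrow> real ^ 'd)) measure)"
proof -
  let ?M = "enl_space e c t \<Otimes>\<^sub>M (step_space e c :: ('w \<times> (real^'d)) measure)"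
  have f1: "(\<lambda>x. (fst (fst x))(Suc t := fst (snd x))) \<in> measurable ?M (path_space (Suc t) :: (nat \<Rightarrow> 'w) measure)"
    unfolding path_space_def
  proof (rule measurable_PiM_single')
    fix i assume i: "i \<in> {1..Suc t}"
    show "(\<lambda>x. ((fst (fst x))(Suc t := fst (snd x))) i) \<in> ?M \<rightarrow>\<^sub>M borel"
    proof (cases "i = Suc t")
      case True then show ?thesis unfolding enl_space_def step_space_def by simp
    next
      case False
      then have "i \<in> {1..t}" using i by auto
      with False show ?thesis unfolding enl_space_def step_space_def path_space_def by simp
    qed
  next
    show "(\<lambda>x. (fst (fst x))(Suc t := fst (snd x))) \<in> space ?M \<rightarrow> (\<Pi>\<^sub>E i\<in>{1..Suc t}. space borel)"
      unfolding enl_space_def step_space_def path_space_def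
      by (auto simp: space_pair_measure space_PiM PiE_def extensional_def)
  qed
  have f2: "(\<lambda>x. (snd (fst x))(Suc t := snd (snd x))) \<in> measurable ?M (PiM {0..Suc t} (\<lambda>_. Lambda_measure e c))"
  proof (rule measurable_PiM_single')
    fix i assume i: "i \<in> {0..Suc t}"
    show "(\<lambda>x. ((snd (fst x))(Suc t := snd (snd x))) i) \<in> ?M \<rightarrow>\<^sub>M Lambda_measure e c"
    proof (cases "i = Suc t")
      case True then show ?thesis unfolding enl_space_def step_space_def by simp
    next
      case False
      then have "i \<in> {0..t}" using i by auto
      with False show ?thesis unfolding enl_space_def step_space_def by simp
    qed
  next
    show "(\<lambda>x. (snd (fst x))(Suc t := snd (snd x))) \<in> space ?M \<rightarrow> (\<Pi>\<^sub>E i\<in>{0..Suc t}. space (Lambda_measure e c))"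
      unfolding enl_space_def step_space_def
      by (auto simp: space_pair_measure space_PiM PiE_def extensional_def Pi_def)
  qed
  have "(\<lambda>x. ((fst (fst x))(Suc t := fst (snd x)), (snd (fst x))(Suc t := snd (snd x)))) \<in> measurable ?M (enl_space e c (Suc t))"
    unfolding enl_space_def[of e c "Suc t"] using f1 f2 by (rule measurable_Pair)
  then show ?thesis by (simp add: concat_path_def case_prod_beta')
qed
theorem mainTheorem2:
  fixes T :: nat and c :: real and e :: "'d::finite"
    and P :: "nat \<Rightarrow> (nat \<Rightarrow> 'w::polish_space) \<Rightarrow> 'w measure set"
    and K :: "nat \<Rightarrow> (nat \<Rightarrow> 'w) \<Rightarrow> (real ^ 'd) set"
    and S :: "nat \<Rightarrow> (nat \<Rightarrow> 'w) \<Rightarrow> real ^ 'd"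
  assumes T_pos: "T \<ge> 1"
    and d_ge2: "CARD('d) \<ge> 2"
    and P_conv: "\<forall>t<T. \<forall>\<omega>\<in>space (path_space t).
        P t \<omega> \<noteq> {} \<and> P t \<omega> \<subseteq> space (prob_algebra (borel :: 'w measure)) \<and>
        (\<forall>Q1\<in>P t \<omega>. \<forall>Q2\<in>P t \<omega>. \<forall>l\<in>{0..1}. mix_measure l Q1 Q2 \<in> P t \<omega>)"
    and P_analytic: "\<forall>t<T. analytic_set (path_space t \<Otimes>\<^sub>M prob_algebra (borel :: 'w measure))
        {(\<omega>, Q). \<omega> \<in> space (path_space t) \<and> Q \<in> P t \<omega>}"
    and K_meas: "\<forall>t\<le>T. effros_measurable (path_space t) (K t)"
    and K_cone: "\<forall>t\<le>T. \<forall>\<omega>\<in>space (path_space t).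
        closed (K t \<omega>) \<and> convex_cone (K t \<omega>) \<and> nonneg_orthant \<subseteq> K t \<omega> \<and>
        dual_cone (K t \<omega>) \<inter> frontier nonneg_orthant = {0} \<and>
        interior (dual_cone (K t \<omega>)) \<noteq> {}"
    and S_adapted: "\<forall>t\<le>T. S t \<in> borel_measurable (path_space t)"
    and S_in: "\<forall>t\<le>T. \<forall>\<omega>\<in>space (path_space t).
        S t \<omega> \<in> Kstar0 e (K t \<omega>) \<inter> interior (dual_cone (K t \<omega>))"
    and c_gt1: "c > 1"
    and c_bound: "\<forall>t\<le>T. \<forall>\<omega>\<in>space (path_space t). \<forall>y\<in>Kstar0 e (K t \<omega>). \<forall>i. i \<noteq> e \<longrightarrow>
        S t \<omega> $ i / c \<le> y $ i \<and> y $ i \<le> c * S t \<omega> $ i"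
  shows "\<forall>t<T. analytic_set (enl_space e c t \<Otimes>\<^sub>M prob_algebra (step_space e c :: ('w \<times> (real ^ 'd)) measure))
        {(wb, Pb). wb \<in> space (enl_space e c t) \<and> Pb \<in> Pbar_int e c K S P t wb}"
proof (intro allI impI)
  fix t assume tT: "t < T"
  define M1 where "M1 = (enl_space e c t :: ((nat \<Rightarrow> 'w) \<times> (nat \<Rightarrow> real ^ 'd)) measure)"
  define St where "St = (step_space e c :: ('w \<times> (real ^ 'd)) measure)"
  define M2 where "M2 = prob_algebra St"
  define N where "N = (enl_space e c (Suc t) :: ((nat \<Rightarrow> 'w) \<times> (nat \<Rightarrow> real ^ 'd)) measure)"
  define E where "E = {x \<in> space N. Xproc e K S (Suc t) x \<in> interior (dual_cone (K (Suc t) (fst x)))}"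
  define G where "G = {(wb, Pb). wb \<in> space M1 \<and> Pb \<in> Pbar_int e c K S P t wb}"
  have cm: "(\<lambda>(wb,z). concat_path t wb z) \<in> measurable (M1 \<Otimes>\<^sub>M St) N"
    unfolding M1_def St_def N_def by (rule concat_meas)
  have key: "emeasure (dirac_prod e c t wb Pb) E =
      (if E \<in> sets N then emeasure Pb (concat_path t wb -` E \<inter> space St) else 0)"
    if wb: "wb \<in> space M1" and Pb: "Pb \<in> space M2" for wb Pb
  proof (cases "E \<in> sets N")
    case False
    then show ?thesis unfolding dirac_prod_def N_def[symmetric]
      by (simp add: emeasure_notin_sets)
  next
    case True
    have sPb: "sets Pb = sets St" using Pb unfolding M2_def by (simp add: space_prob_algebra)
    then have spPb: "space Pb = space St" by (rule sets_eq_imp_space_eq)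
    have "(\<lambda>y. (\<lambda>(wb,z). concat_path t wb z) (wb, y)) \<in> measurable St N"
      by (rule measurable_Pair2[OF cm wb])
    then have "concat_path t wb \<in> measurable Pb N"
      using measurable_cong_sets[OF sPb refl, of N] by simp
    then show ?thesis unfolding dirac_prod_def N_def[symmetric]
      using True by (simp add: emeasure_distr spPb)
  qed
  show "analytic_set (enl_space e c t \<Otimes>\<^sub>M prob_algebra (step_space e c :: ('w \<times> (real ^ 'd)) measure))
        {(wb, Pb). wb \<in> space (enl_space e c t) \<and> Pb \<in> Pbar_int e c K S P t wb}"
    unfolding M1_def[symmetric] St_def[symmetric] M2_def[symmetric] G_def[symmetric]
  proof (cases "E \<in> sets N")
    case False
    have nG: "(wb, Pb) \<notin> G" for wb Pb
    proof
      assume "(wb, Pb) \<in> G"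
      then have wb: "wb \<in> space M1" and Pb: "Pb \<in> Pbar_int e c K S P t wb" unfolding G_def by auto
      then have "Pb \<in> space M2" unfolding Pbar_int_def Pbar_def M2_def St_def by auto
      with key[OF wb this] False Pb show False
        unfolding Pbar_int_def E_def N_def by auto
    qed
    have "G = {}" using nG by auto
    then show "analytic_set (M1 \<Otimes>\<^sub>M M2) G" unfolding analytic_set_def
      by (intro bexI[of _ "{}"]) auto
  next
    case True
    have "t < T" by fact
    then obtain B0 where B0: "B0 \<in> sets ((path_space t \<Otimes>\<^sub>M prob_algebra (borel :: 'w measure)) \<Otimes>\<^sub>M baire_measure)"
      and gr: "{(\<omega>, Q). \<omega> \<in> space (path_space t) \<and> Q \<in> P t \<omega>} = fst ` B0"
      using P_analytic unfolding analytic_set_def by blast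
    define g where "g = (\<lambda>p::((nat \<Rightarrow> 'w) \<times> (nat \<Rightarrow> real ^ 'd)) \<times> ('w \<times> (real ^ 'd)) measure.
        (fst (fst p), distr (snd p) (borel :: 'w measure) fst))"
    have gm: "g \<in> measurable (M1 \<Otimes>\<^sub>M M2) (path_space t \<Otimes>\<^sub>M prob_algebra (borel :: 'w measure))"
    proof -
      have d: "(\<lambda>Q. distr Q (borel :: 'w measure) fst) \<in> measurable M2 (prob_algebra borel)"
        unfolding M2_def St_def step_space_def
        by (rule measurable_distr_prob_space) simp
      have f: "(\<lambda>x. fst x) \<in> measurable M1 (path_space t)"
        unfolding M1_def enl_space_def by simp
      show ?thesis unfolding g_def
        by (intro measurable_Pair measurable_compose[OF measurable_fst f]
            measurable_compose[OF measurable_snd d])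
    qed
    define A where "A = (\<lambda>p::((nat \<Rightarrow> 'w) \<times> (nat \<Rightarrow> real ^ 'd)) \<times> ('w \<times> (real ^ 'd)) measure.
        concat_path t (fst p) -` E \<inter> space St)"
    define C where "C = {p \<in> space (M1 \<Otimes>\<^sub>M M2). emeasure (snd p) (A p) = 1}"
    have Cm: "C \<in> sets (M1 \<Otimes>\<^sub>M M2)"
    proof -
      have h: "(\<lambda>(p, z). concat_path t (fst p) z) \<in> measurable ((M1 \<Otimes>\<^sub>M M2) \<Otimes>\<^sub>M St) N"
      proof -
        have "(\<lambda>(p, z). (fst p, z)) \<in> measurable ((M1 \<Otimes>\<^sub>M M2) \<Otimes>\<^sub>M St) (M1 \<Otimes>\<^sub>M St)"
          by measurable
        from measurable_comp[OF this cm] show ?thesis by (simp add: comp_def case_prod_beta')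
      qed
      have "(SIGMA p:space (M1 \<Otimes>\<^sub>M M2). A p) = (\<lambda>(p, z). concat_path t (fst p) z) -` E \<inter> space ((M1 \<Otimes>\<^sub>M M2) \<Otimes>\<^sub>M St)"
        unfolding A_def by (auto simp: space_pair_measure)
      also have "\<dots> \<in> sets ((M1 \<Otimes>\<^sub>M M2) \<Otimes>\<^sub>M St)"
        using measurable_sets[OF h True] .
      finally have S: "(SIGMA p:space (M1 \<Otimes>\<^sub>M M2). A p) \<in> sets ((M1 \<Otimes>\<^sub>M M2) \<Otimes>\<^sub>M St)" .
      have L: "snd \<in> measurable (M1 \<Otimes>\<^sub>M M2) (subprob_algebra St)"
        unfolding M2_def by (intro measurable_prob_algebraD) simp
      have "(\<lambda>p. emeasure (snd p) (A p)) \<in> borel_measurable (M1 \<Otimes>\<^sub>M M2)"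
        by (rule emeasure_measurable_subprob_algebra2[OF S L])
      then show ?thesis unfolding C_def by measurable
    qed
    define B' where "B' = {q \<in> space ((M1 \<Otimes>\<^sub>M M2) \<Otimes>\<^sub>M baire_measure). (g (fst q), snd q) \<in> B0 \<and> fst q \<in> C}"
    have B'm: "B' \<in> sets ((M1 \<Otimes>\<^sub>M M2) \<Otimes>\<^sub>M baire_measure)"
    proof -
      have gg: "(\<lambda>q. (g (fst q), snd q)) \<in> measurable ((M1 \<Otimes>\<^sub>M M2) \<Otimes>\<^sub>M baire_measure)
          ((path_space t \<Otimes>\<^sub>M prob_algebra (borel :: 'w measure)) \<Otimes>\<^sub>M baire_measure)"
        by (intro measurable_Pair measurable_compose[OF measurable_fst gm] measurable_snd)
      have "B' = ((\<lambda>q. (g (fst q), snd q)) -` B0 \<inter> space ((M1 \<Otimes>\<^sub>M M2) \<Otimes>\<^sub>M baire_measure))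
          \<inter> (fst -` C \<inter> space ((M1 \<Otimes>\<^sub>M M2) \<Otimes>\<^sub>M baire_measure))"
        unfolding B'_def by auto
      also have "\<dots> \<in> sets ((M1 \<Otimes>\<^sub>M M2) \<Otimes>\<^sub>M baire_measure)"
        by (intro sets.Int measurable_sets[OF gg B0] measurable_sets[OF measurable_fst Cm])
      finally show ?thesis .
    qed
    have spM1: "fst wb \<in> space (path_space t)" if "wb \<in> space M1" for wb
      using that unfolding M1_def enl_space_def by (auto simp: space_pair_measure)
    have "G = fst ` B'"
    proof (intro equalityI subsetI)
      fix x assume "x \<in> G"
      then obtain wb Pb where x: "x = (wb, Pb)" and "(wb, Pb) \<in> G" by (cases x) auto
      then have wb: "wb \<in> space M1" and Pb: "Pb \<in> Pbar_int e c K S P t wb" unfolding G_def by auto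
      then have Pb2: "Pb \<in> space M2" unfolding Pbar_int_def Pbar_def M2_def St_def by auto
      have inP: "distr Pb borel fst \<in> P t (fst wb)" using Pb unfolding Pbar_int_def Pbar_def by auto
      have "g (wb, Pb) \<in> fst ` B0" unfolding gr[symmetric] g_def using inP spM1[OF wb] by auto
      then obtain y where y: "(g (wb, Pb), y) \<in> B0" by force
      have "y \<in> space baire_measure"
        using sets.sets_into_space[OF B0] y by (auto simp: space_pair_measure)
      moreover have "(wb, Pb) \<in> C"
        using key[OF wb Pb2] True Pb wb Pb2 unfolding C_def A_def Pbar_int_def E_def N_def
        by (auto simp: space_pair_measure)
      ultimately have "((wb, Pb), y) \<in> B'" unfolding B'_def using y wb Pb2
        by (auto simp: space_pair_measure)
      then show "x \<in> fst ` B'" unfolding x by force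
    next
      fix x assume "x \<in> fst ` B'"
      then obtain wb Pb y where x: "x = (wb, Pb)" and q: "((wb, Pb), y) \<in> B'" by force
      then have wb: "wb \<in> space M1" and Pb2: "Pb \<in> space M2" and y: "(g (wb, Pb), y) \<in> B0"
        and C: "(wb, Pb) \<in> C" unfolding B'_def by (auto simp: space_pair_measure)
      have "g (wb, Pb) \<in> fst ` B0" using y by force
      then have inP: "distr Pb borel fst \<in> P t (fst wb)" unfolding gr[symmetric] g_def by auto
      have "Pb \<in> Pbar_int e c K S P t wb"
        using key[OF wb Pb2] True C inP Pb2 unfolding C_def A_def Pbar_int_def Pbar_def E_def N_def M2_def St_def
        by auto
      then show "x \<in> G" unfolding G_def x using wb by auto
    qed
    then show "analytic_set (M1 \<Otimes>\<^sub>M M2) G" unfolding analytic_set_def using B'm by blast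
  qed
qed

end
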